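(* Let $M,N\ge0$ be integers and $a,b,c,d,q$ generic complex parameters. For all $\alpha,\beta\in\{0,1\}$, all $0\le k\le M$, $0\le j\le N$ and $0\le l\le M+N$, $$R_{k+j}^l(a,b,c,d;M+N;q)=\sum_{\substack{m+n=l\\0\le m\le M,\ 0\le n\le N}}R_k^m\big(aq^{\alpha j},bq^{\beta(N-j)},c,d;M;q\big)\,R_j^n\big(aq^{(1-\alpha)k},bq^{(1-\beta)(M-k)},cq^m,dq^{M-m};N;q\big).$$
   Context: $h_k(x;a)=\prod_{j=0}^{k-1}(1-axq^j+a^2q^{2j})$. For generic parameters, $R_k^l(a,b,c,d;N;q)$ ($0\le k,l\le N$) are the unique coefficients with $h_k(x;a)h_{N-k}(x;b)=\sum_{l=0}^N R_k^l(a,b,c,d;N;q)h_l(x;c)h_{N-l}(x;d)$ as polynomials in $x$. *)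

theory Defs
  imports Complex_Main "HOL-Computational_Algebra.Polynomial"
begin

definition hpoly :: "complex \<Rightarrow> complex \<Rightarrow> nat \<Rightarrow> complex poly" where
  "hpoly a q k = (\<Prod>j<k. [: 1 + a^2 * q^(2*j), - (a * q^j) :])"

definition cdbasis :: "complex \<Rightarrow> complex \<Rightarrow> nat \<Rightarrow> complex \<Rightarrow> nat \<Rightarrow> complex poly" where
  "cdbasis c d N q l = hpoly c q l * hpoly d q (N - l)"

text \<open>Genericity condition: the polynomials h_l(x;c) h_{N-l}(x;d), 0 \<le> l \<le> N,
  are linearly independent, so the coefficients R are uniquely determined.\<close>
definition generic_cd :: "complex \<Rightarrow> complex \<Rightarrow> nat \<Rightarrow> complex \<Rightarrow> bool" where
  "generic_cd c d N q \<longleftrightarrow>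
     (\<forall>r :: nat \<Rightarrow> complex. (\<Sum>l\<le>N. smult (r l) (cdbasis c d N q l)) = 0 \<longrightarrow> (\<forall>l\<le>N. r l = 0))"

definition Rcoef :: "complex \<Rightarrow> complex \<Rightarrow> complex \<Rightarrow> complex \<Rightarrow> nat \<Rightarrow> complex \<Rightarrow> nat \<Rightarrow> nat \<Rightarrow> complex" where
  "Rcoef a b c d N q k l =
     (THE r :: nat \<Rightarrow> complex. (\<forall>i>N. r i = 0) \<and>
        hpoly a q k * hpoly b q (N - k) = (\<Sum>i\<le>N. smult (r i) (cdbasis c d N q i))) l"

end

theory Submission
  imports Defs
begin


definition fac :: "complex \<Rightarrow> complex \<Rightarrow> nat \<Rightarrow> complex poly" where
  "fac a q j = [: 1 + a^2 * q^(2*j), - (a * q^j) :]"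

lemma hpoly_fac: "hpoly a q k = prod (fac a q) {..<k}"
  by (simp add: hpoly_def fac_def)

lemma fac_shift: "fac (a * q^k) q j = fac a q (k + j)"
proof -
  have "(a*q^k)^2 * q^(2*j) = a^2 * q^(2*(k+j))" "a * q^k * q^j = a * q^(k+j)"
    by (simp_all add: power_add power_mult_distrib power_mult mult_ac)
  then show ?thesis unfolding fac_def by simp
qed

lemma hpoly_add: "hpoly a q (k + j) = hpoly a q k * hpoly (a * q^k) q j"
proof (induction j)
  case 0 then show ?case by (simp add: hpoly_def)
next
  case (Suc j)
  have "hpoly a q (k + Suc j) = hpoly a q (k + j) * fac a q (k + j)"
    unfolding hpoly_fac by (simp only: add_Suc_right prod.lessThan_Suc)
  also have "\<dots> = hpoly a q k * (hpoly (a * q^k) q j * fac (a * q^k) q j)"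
    using Suc by (simp only: fac_shift mult.assoc)
  also have "hpoly (a * q^k) q j * fac (a * q^k) q j = hpoly (a * q^k) q (Suc j)"
    unfolding hpoly_fac by (simp only: prod.lessThan_Suc)
  finally show ?case .
qed

lemma degree_hpoly: "degree (hpoly a q k) \<le> k"
proof -
  have "degree (hpoly a q k) \<le> (\<Sum>j<k. degree (fac a q j))"
    unfolding hpoly_fac using degree_prod_sum_le[of "{..<k}" "fac a q"] by (simp add: o_def)
  also have "\<dots> \<le> (\<Sum>j<k. 1)" by (intro sum_mono) (auto simp: fac_def)
  finally show ?thesis by simp
qed

lemma generic_inj:
  assumes g: "generic_cd c d N q"
  shows "inj_on (cdbasis c d N q) {..N}"
proof (rule inj_onI, rule ccontr)
  fix i j assume ij: "i \<in> {..N}" "j \<in> {..N}" "cdbasis c d N q i = cdbasis c d N q j" "i \<noteq> j"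
  define r where "r = (\<lambda>l. if l = i then (1::complex) else if l = j then -1 else 0)"
  have "(\<Sum>l\<le>N. smult (r l) (cdbasis c d N q l)) =
        (\<Sum>l\<in>{i,j}. smult (r l) (cdbasis c d N q l))"
    using ij by (intro sum.mono_neutral_right) (auto simp: r_def)
  also have "\<dots> = 0" using ij by (simp add: r_def)
  finally have "r i = 0" using g ij unfolding generic_cd_def by blast
  then show False by (simp add: r_def)
qed

lemma generic_exists:
  assumes g: "generic_cd c d N q" and dp: "degree p \<le> N"
  shows "\<exists>r. (\<forall>i>N. r i = 0) \<and> p = (\<Sum>i\<le>N. smult (r i) (cdbasis c d N q i))"
proof -
  interpret pv: vector_space "smult :: complex \<Rightarrow> complex poly \<Rightarrow> complex poly"
    by unfold_locales (auto simp: smult_add_right smult_add_left)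
  have generic_indep: "pv.independent (cdbasis c d N q ` {..N})"
proof (rule pv.independent_if_scalars_zero)
  show "finite (cdbasis c d N q ` {..N})" by simp
  fix f x assume s: "(\<Sum>x\<in>cdbasis c d N q ` {..N}. smult (f x) x) = 0"
    and x: "x \<in> cdbasis c d N q ` {..N}"
  have "(\<Sum>l\<le>N. smult (f (cdbasis c d N q l)) (cdbasis c d N q l)) = 0"
    using s sum.reindex[OF generic_inj[OF g], of "\<lambda>x. smult (f x) x"] by simp
  then have "\<forall>l\<le>N. f (cdbasis c d N q l) = 0"
    using spec[OF g[unfolded generic_cd_def], of "\<lambda>l. f (cdbasis c d N q l)"] by simp
  then show "f x = 0" using x by auto
qed
  have pspan: "p \<in> pv.span (cdbasis c d N q ` {..N})"
proof (rule ccontr)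
  let ?B = "cdbasis c d N q ` {..N}"
  let ?W = "(\<lambda>i. monom (1::complex) i) ` {..N}"
  have inW: "degree u \<le> N \<Longrightarrow> u \<in> pv.span ?W" for u :: "complex poly"
  proof -
    assume du: "degree u \<le> N"
    have "u = (\<Sum>i\<le>N. smult (coeff u i) (monom 1 i))"
      using poly_as_sum_of_monoms'[OF du] by (simp add: smult_monom)
    also have "\<dots> \<in> pv.span ?W"
      by (intro pv.span_sum pv.span_scale pv.span_base) auto
    finally show ?thesis .
  qed
  have deg_cd: "degree (cdbasis c d N q l) \<le> N" if "l \<le> N" for l
  proof -
    have "degree (cdbasis c d N q l) \<le> degree (hpoly c q l) + degree (hpoly d q (N - l))"
      unfolding cdbasis_def by (rule degree_mult_le)
    also have "\<dots> \<le> l + (N - l)" using degree_hpoly by (intro add_mono) auto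
    finally show ?thesis using that by simp
  qed
  assume np: "p \<notin> pv.span ?B"
  have ind: "pv.independent (insert p ?B)"
    using pv.independent_insertI[OF np generic_indep] .
  have sub: "insert p ?B \<subseteq> pv.span ?W" using inW dp deg_cd by auto
  have "card (insert p ?B) \<le> card ?W"
    using pv.independent_span_bound[OF _ ind sub] by simp
  also have "\<dots> \<le> N + 1" using card_image_le[of "{..N}" "\<lambda>i. monom (1::complex) i"] by simp
  finally have c1: "card (insert p ?B) \<le> N + 1" .
  have pnB: "p \<notin> ?B"
  proof
    assume "p \<in> ?B"
    then have "p \<in> pv.span ?B" by (rule pv.span_base)
    with np show False by (rule notE)
  qed
  have finB: "finite ?B" by (rule finite_imageI) simp
  have c2: "card (insert p ?B) = Suc (card ?B)" by (rule card_insert_disjoint[OF finB pnB])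
  have c3: "card ?B = card {..N}" by (rule card_image[OF generic_inj[OF g]])
  have "card {..N} = N + 1" by simp
  with c1 c2 c3 show False by linarith
qed
  obtain u where u: "p = (\<Sum>v\<in>cdbasis c d N q ` {..N}. smult (u v) v)"
    using pspan unfolding pv.span_finite[OF finite_imageI[OF finite_atMost]] by blast
  define r where "r i = (if i \<le> N then u (cdbasis c d N q i) else 0)" for i
  have "p = (\<Sum>i\<le>N. smult (u (cdbasis c d N q i)) (cdbasis c d N q i))"
    using u sum.reindex[OF generic_inj[OF g], of "\<lambda>v. smult (u v) v"] by simp
  also have "\<dots> = (\<Sum>i\<le>N. smult (r i) (cdbasis c d N q i))"
    by (intro sum.cong) (auto simp: r_def)
  finally show ?thesis by (intro exI[of _ r]) (auto simp: r_def)
qed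

lemma generic_uniq:
  assumes g: "generic_cd c d N q"
    and r: "\<forall>i>N. r i = 0" "p = (\<Sum>i\<le>N. smult (r i) (cdbasis c d N q i))"
    and s: "\<forall>i>N. s i = 0" "p = (\<Sum>i\<le>N. smult (s i) (cdbasis c d N q i))"
  shows "r = s"
proof
  fix i
  have "(\<Sum>l\<le>N. smult (r l - s l) (cdbasis c d N q l)) = 0"
    using r(2) s(2) by (simp add: smult_diff_left sum_subtractf)
  then have "\<forall>l\<le>N. r l - s l = 0"
    using spec[OF g[unfolded generic_cd_def], of "\<lambda>l. r l - s l"] by simp
  then show "r i = s i" using r(1) s(1) by (cases "i \<le> N") auto
qed

lemma Rcoef_eq:
  assumes g: "generic_cd c d N q"
    and r: "\<forall>i>N. r i = 0" "hpoly a q k * hpoly b q (N - k) = (\<Sum>i\<le>N. smult (r i) (cdbasis c d N q i))"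
  shows "Rcoef a b c d N q k = r"
proof -
  have th: "(THE r :: nat \<Rightarrow> complex. (\<forall>i>N. r i = 0) \<and>
        hpoly a q k * hpoly b q (N - k) = (\<Sum>i\<le>N. smult (r i) (cdbasis c d N q i))) = r"
    using r generic_uniq[OF g] by (intro the_equality) auto
  show ?thesis
  proof
    fix l show "Rcoef a b c d N q k l = r l" unfolding Rcoef_def th ..
  qed
qed


lemma Rcoef_spec:
  assumes g: "generic_cd c d N q" and kN: "k \<le> N"
  shows "hpoly a q k * hpoly b q (N - k) = (\<Sum>i\<le>N. smult (Rcoef a b c d N q k i) (cdbasis c d N q i))"
proof -
  have "degree (hpoly a q k * hpoly b q (N - k)) \<le> degree (hpoly a q k) + degree (hpoly b q (N - k))"
    by (rule degree_mult_le)
  also have "\<dots> \<le> k + (N - k)" using degree_hpoly by (intro add_mono) auto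
  finally have "degree (hpoly a q k * hpoly b q (N - k)) \<le> N" using kN by simp
  from generic_exists[OF g this] obtain r where r: "\<forall>i>N. r i = 0"
    "hpoly a q k * hpoly b q (N - k) = (\<Sum>i\<le>N. smult (r i) (cdbasis c d N q i))" by blast
  have "Rcoef a b c d N q k = r" by (rule Rcoef_eq[OF g r])
  then show ?thesis using r by simp
qed

theorem mainTheorem8:
  fixes M N :: nat and a b c d q :: complex and \<alpha> \<beta> k j l :: nat
  assumes gen_total: "generic_cd c d (M + N) q"
    and gen_M: "generic_cd c d M q"
    and gen_N: "\<forall>m\<le>M. generic_cd (c * q^m) (d * q^(M - m)) N q"
    and "\<alpha> \<in> {0, 1}" and "\<beta> \<in> {0, 1}"
    and "k \<le> M" and "j \<le> N" and "l \<le> M + N"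
  shows "Rcoef a b c d (M + N) q (k + j) l =
    (\<Sum>(m, n) \<in> {(m, n). m + n = l \<and> m \<le> M \<and> n \<le> N}.
       Rcoef (a * q^(\<alpha> * j)) (b * q^(\<beta> * (N - j))) c d M q k m *
       Rcoef (a * q^((1 - \<alpha>) * k)) (b * q^((1 - \<beta>) * (M - k))) (c * q^m) (d * q^(M - m)) N q j n)"
proof -
  note asm = assms
  define A1 where "A1 = a * q^(\<alpha> * j)"
  define B1 where "B1 = b * q^(\<beta> * (N - j))"
  define A2 where "A2 = a * q^((1 - \<alpha>) * k)"
  define B2 where "B2 = b * q^((1 - \<beta>) * (M - k))"
  define R1 where "R1 = Rcoef A1 B1 c d M q k"
  define R2 where "R2 m = Rcoef A2 B2 (c * q^m) (d * q^(M - m)) N q j" for m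
  define S where "S l' = {(m, n). m + n = l' \<and> m \<le> M \<and> n \<le> N}" for l'
  define r where "r l' = (\<Sum>(m, n) \<in> S l'. R1 m * R2 m n)" for l'
  have fa: "hpoly a q (k + j) = hpoly A1 q k * hpoly A2 q j"
  proof (cases "\<alpha> = 0")
    case True then show ?thesis by (simp add: A1_def A2_def hpoly_add)
  next
    case False then have "\<alpha> = 1" using asm(4) by auto
    then show ?thesis using hpoly_add[of a q j k] by (simp add: A1_def A2_def add.commute mult.commute)
  qed
  have kj: "M + N - (k + j) = (M - k) + (N - j)" using asm(6,7) by simp
  have fb: "hpoly b q (M + N - (k + j)) = hpoly B1 q (M - k) * hpoly B2 q (N - j)"
  proof (cases "\<beta> = 0")
    case True then show ?thesis unfolding kj by (simp add: B1_def B2_def hpoly_add)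
  next
    case False then have "\<beta> = 1" using asm(5) by auto
    then show ?thesis unfolding kj using hpoly_add[of b q "N - j" "M - k"]
      by (simp add: B1_def B2_def add.commute mult.commute)
  qed
  have E1: "hpoly A1 q k * hpoly B1 q (M - k) = (\<Sum>m\<le>M. smult (R1 m) (cdbasis c d M q m))"
    unfolding R1_def by (rule Rcoef_spec[OF gen_M asm(6)])
  have E2: "hpoly A2 q j * hpoly B2 q (N - j) =
      (\<Sum>n\<le>N. smult (R2 m n) (cdbasis (c * q^m) (d * q^(M - m)) N q n))" if "m \<le> M" for m
    unfolding R2_def using gen_N that asm(7) by (intro Rcoef_spec) auto
  have comb: "cdbasis c d M q m * cdbasis (c * q^m) (d * q^(M - m)) N q n = cdbasis c d (M + N) q (m + n)"
    if "m \<le> M" "n \<le> N" for m n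
  proof -
    have "M + N - (m + n) = (M - m) + (N - n)" using that by simp
    then show ?thesis unfolding cdbasis_def
      using hpoly_add[of c q m n] hpoly_add[of d q "M - m" "N - n"] by (simp add: mult_ac)
  qed
  have "hpoly a q (k + j) * hpoly b q (M + N - (k + j)) =
      (hpoly A1 q k * hpoly B1 q (M - k)) * (hpoly A2 q j * hpoly B2 q (N - j))"
    unfolding fa fb by (simp add: mult_ac)
  also have "\<dots> = (\<Sum>m\<le>M. smult (R1 m) (cdbasis c d M q m) * (hpoly A2 q j * hpoly B2 q (N - j)))"
    unfolding E1 by (simp add: sum_distrib_right)
  also have "\<dots> = (\<Sum>m\<le>M. \<Sum>n\<le>N. smult (R1 m * R2 m n) (cdbasis c d (M + N) q (m + n)))"
  proof (intro sum.cong refl)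
    fix m assume m: "m \<in> {..M}"
    have "smult (R1 m) (cdbasis c d M q m) * (hpoly A2 q j * hpoly B2 q (N - j)) =
      (\<Sum>n\<le>N. smult (R1 m) (cdbasis c d M q m) * smult (R2 m n) (cdbasis (c * q^m) (d * q^(M - m)) N q n))"
      using m by (simp add: E2 sum_distrib_left)
    also have "\<dots> = (\<Sum>n\<le>N. smult (R1 m * R2 m n) (cdbasis c d (M + N) q (m + n)))"
      using m by (intro sum.cong refl) (simp add: comb[symmetric] mult_ac)
    finally show "smult (R1 m) (cdbasis c d M q m) * (hpoly A2 q j * hpoly B2 q (N - j)) =
      (\<Sum>n\<le>N. smult (R1 m * R2 m n) (cdbasis c d (M + N) q (m + n)))" .
  qed
  also have "\<dots> = (\<Sum>(m, n) \<in> {..M} \<times> {..N}. smult (R1 m * R2 m n) (cdbasis c d (M + N) q (m + n)))"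
    by (simp add: sum.cartesian_product)
  also have "\<dots> = (\<Sum>l'\<le>M + N. \<Sum>x \<in> {x \<in> {..M} \<times> {..N}. fst x + snd x = l'}.
       (case x of (m, n) \<Rightarrow> smult (R1 m * R2 m n) (cdbasis c d (M + N) q (m + n))))"
    by (rule sum.group[symmetric]) auto
  also have "\<dots> = (\<Sum>l'\<le>M + N. smult (r l') (cdbasis c d (M + N) q l'))"
  proof (intro sum.cong refl)
    fix l' assume "l' \<in> {..M + N}"
    have Seq: "{x \<in> {..M} \<times> {..N}. fst x + snd x = l'} = S l'" by (auto simp: S_def)
    show "(\<Sum>x \<in> {x \<in> {..M} \<times> {..N}. fst x + snd x = l'}.
       (case x of (m, n) \<Rightarrow> smult (R1 m * R2 m n) (cdbasis c d (M + N) q (m + n)))) =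
      smult (r l') (cdbasis c d (M + N) q l')"
      unfolding Seq r_def smult_sum
      by (intro sum.cong refl) (auto simp: S_def)
  qed
  finally have eq: "hpoly a q (k + j) * hpoly b q (M + N - (k + j)) =
      (\<Sum>l'\<le>M + N. smult (r l') (cdbasis c d (M + N) q l'))" .
  have rz: "\<forall>i>M + N. r i = 0"
  proof (intro allI impI)
    fix i assume "i > M + N" then have "S i = {}" by (auto simp: S_def)
    then show "r i = 0" by (simp add: r_def)
  qed
  have "Rcoef a b c d (M + N) q (k + j) = r" by (rule Rcoef_eq[OF gen_total rz eq])
  then show ?thesis by (simp add: r_def S_def R1_def R2_def A1_def A2_def B1_def B2_def)
qed

end
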